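(* Let $t\geq1$, $1\leq K_1\leq K_2$ be integers and $0<\mu<1/(2K_1)$. There is $n_0$ such that for all $n\geq n_0$ the following holds. Suppose $G=(U\cup V,E)$ is a bipartite graph with $|V|=K_1$ and $|U|=K_2$, and $\mathbf{H}$ is a simple $n$-blowup of the $3$-graph $H=\widehat{G}_{UV}$. If $\mathcal{P}$ is a $\mu$-regular partition of $\mathbf{H}$ with at most $t$ parts, then $\mathcal{P}$ is $4\mu$-homogeneous with respect to $\mathbf{H}$.
   Context: For a bipartite graph $G=(U\cup V,E)$, $\widehat G_{UV}$ is the $3$-graph with vertex set $\{a_u:u\in U\}\cup\{b_v:v\in V\}\cup\{c_v:v\in V\}$ and edges $a_ub_vc_v$ for $uv\in E$. For a $3$-graph $G'=(W,F)$, a simple $n$-blowup is the $3$-graph on $\bigcup_{w\in W}V_w$ (disjoint, $|V_w|=n$) with edge set $\bigcup_{w_1w_2w_3\in F}\{\{x_1,x_2,x_3\}:x_i\in V_{w_i}\}$. For a $3$-graph $\mathbf H$ and nonempty $X,Y,Z\subseteq V(\mathbf H)$, $d_{\mathbf H}(X,Y,Z)=|\{(x,y,z)\in X\times Y\times Z:\{x,y,z\}\in E(\mathbf H)\}|/(|X||Y||Z|)$. $(X,Y,Z)$ is $\mu$-regular if $|d(X,Y,Z)-d(X',Y',Z')|\le\mu$ for all $X'\subseteq X,Y'\subseteq Y,Z'\subseteq Z$ of sizes at least $\mu|X|,\mu|Y|,\mu|Z|$; it is $\eta$-homogeneous if $d(X,Y,Z)\in[0,\eta)\cup(1-\eta,1]$.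 A partition $\mathcal P$ of $V(\mathbf H)$ is $\mu$-regular (resp. $\eta$-homogeneous) if at least $(1-\mu)|V(\mathbf H)|^3$ (resp. $(1-\eta)|V(\mathbf H)|^3$) triples of $V(\mathbf H)^3$ lie in $X\times Y\times Z$ for some $\mu$-regular (resp. $\eta$-homogeneous) $(X,Y,Z)\in\mathcal P^3$. *)

theory Defs
  imports Complex_Main "HOL-Library.Disjoint_Sets"
begin

text \<open>3-graphs are given by their edge sets: a set of 3-element vertex sets.\<close>

definition density3 :: "'a set set \<Rightarrow> 'a set \<Rightarrow> 'a set \<Rightarrow> 'a set \<Rightarrow> real" where
  "density3 F X Y Z =
     real (card {(x,y,z). x \<in> X \<and> y \<in> Y \<and> z \<in> Z \<and> {x,y,z} \<in> F})
     / (real (card X) * real (card Y) * real (card Z))"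

definition regular_triple :: "'a set set \<Rightarrow> real \<Rightarrow> 'a set \<Rightarrow> 'a set \<Rightarrow> 'a set \<Rightarrow> bool" where
  "regular_triple F \<mu> X Y Z \<longleftrightarrow>
     (\<forall>X' Y' Z'. X' \<subseteq> X \<and> Y' \<subseteq> Y \<and> Z' \<subseteq> Z \<and>
        real (card X') \<ge> \<mu> * real (card X) \<and> real (card Y') \<ge> \<mu> * real (card Y) \<and>
        real (card Z') \<ge> \<mu> * real (card Z) \<longrightarrow>
        \<bar>density3 F X Y Z - density3 F X' Y' Z'\<bar> \<le> \<mu>)"

definition homogeneous_triple :: "'a set set \<Rightarrow> real \<Rightarrow> 'a set \<Rightarrow> 'a set \<Rightarrow> 'a set \<Rightarrow> bool" where
  "homogeneous_triple F \<eta> X Y Z \<longleftrightarrow>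
     (let d = density3 F X Y Z in (0 \<le> d \<and> d < \<eta>) \<or> (1 - \<eta> < d \<and> d \<le> 1))"

definition regular_partition :: "'a set set \<Rightarrow> 'a set \<Rightarrow> 'a set set \<Rightarrow> real \<Rightarrow> bool" where
  "regular_partition F W P \<mu> \<longleftrightarrow>
     real (card (\<Union>{X \<times> Y \<times> Z | X Y Z. X \<in> P \<and> Y \<in> P \<and> Z \<in> P \<and> regular_triple F \<mu> X Y Z}))
       \<ge> (1 - \<mu>) * real (card W) ^ 3"

definition homogeneous_partition :: "'a set set \<Rightarrow> 'a set \<Rightarrow> 'a set set \<Rightarrow> real \<Rightarrow> bool" where
  "homogeneous_partition F W P \<eta> \<longleftrightarrow>
     real (card (\<Union>{X \<times> Y \<times> Z | X Y Z. X \<in> P \<and> Y \<in> P \<and> Z \<in> P \<and> homogeneous_triple F \<eta> X Y Z}))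
       \<ge> (1 - \<eta>) * real (card W) ^ 3"

text \<open>Vertices of the 3-graph hat G_UV: a_u, b_v, c_v.\<close>
datatype 'v hatv = VA 'v | VB 'v | VC 'v

definition hat_vertices :: "'v set \<Rightarrow> 'v set \<Rightarrow> 'v hatv set" where
  "hat_vertices U V = VA ` U \<union> VB ` V \<union> VC ` V"

definition hat_edges :: "('v \<times> 'v) set \<Rightarrow> 'v hatv set set" where
  "hat_edges E = {{VA u, VB v, VC v} | u v. (u, v) \<in> E}"

definition blowup_vertices :: "'w set \<Rightarrow> nat \<Rightarrow> ('w \<times> nat) set" where
  "blowup_vertices W n = W \<times> {..<n}"

definition blowup_edges :: "'w set set \<Rightarrow> nat \<Rightarrow> ('w \<times> nat) set set" where
  "blowup_edges F n =
     {{(w1, i1), (w2, i2), (w3, i3)} | w1 w2 w3 i1 i2 i3.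
        {w1, w2, w3} \<in> F \<and> i1 < n \<and> i2 < n \<and> i3 < n}"

end

theory Submission
  imports Defs
begin


fun ty :: "'v hatv \<Rightarrow> nat" where
  "ty (VA _) = 0" | "ty (VB _) = 1" | "ty (VC _) = 2"

definition big :: "real \<Rightarrow> 'a set \<Rightarrow> 'a set \<Rightarrow> bool" where
  "big \<mu> S' S \<longleftrightarrow> \<mu> * real (card S) \<le> real (card S')"

definition NE3 :: "real \<Rightarrow> 'a set set \<Rightarrow> 'a set \<Rightarrow> 'a set \<Rightarrow> 'a set \<Rightarrow> bool" where
  "NE3 \<mu> F P Q R \<longleftrightarrow> (\<forall>P' Q' R'. P' \<subseteq> P \<and> Q' \<subseteq> Q \<and> R' \<subseteq> R \<and> big \<mu> P' P \<and> big \<mu> Q' Q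
      \<and> big \<mu> R' R \<longrightarrow> (\<exists>p\<in>P'. \<exists>q\<in>Q'. \<exists>r\<in>R'. {p,q,r} \<in> F))"

definition ALL3 :: "real \<Rightarrow> 'a set set \<Rightarrow> 'a set \<Rightarrow> 'a set \<Rightarrow> 'a set \<Rightarrow> bool" where
  "ALL3 \<mu> F P Q R \<longleftrightarrow> (\<exists>P' Q' R'. P' \<subseteq> P \<and> Q' \<subseteq> Q \<and> R' \<subseteq> R \<and> big \<mu> P' P \<and> big \<mu> Q' Q
      \<and> big \<mu> R' R \<and> (\<forall>p\<in>P'. \<forall>q\<in>Q'. \<forall>r\<in>R'. {p,q,r} \<in> F))"

lemma NE3_swap12: "NE3 \<mu> F P Q R \<Longrightarrow> NE3 \<mu> F Q P R"
  unfolding NE3_def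
proof (intro allI impI)
  fix P' Q' R' assume a: "\<forall>P' Q' R'. P' \<subseteq> P \<and> Q' \<subseteq> Q \<and> R' \<subseteq> R \<and> big \<mu> P' P \<and> big \<mu> Q' Q
      \<and> big \<mu> R' R \<longrightarrow> (\<exists>p\<in>P'. \<exists>q\<in>Q'. \<exists>r\<in>R'. {p,q,r} \<in> F)"
    and b: "P' \<subseteq> Q \<and> Q' \<subseteq> P \<and> R' \<subseteq> R \<and> big \<mu> P' Q \<and> big \<mu> Q' P \<and> big \<mu> R' R"
  from a[rule_format, of Q' P' R'] b obtain p q r where "p \<in> Q'" "q \<in> P'" "r \<in> R'" "{p,q,r} \<in> F" by blast
  moreover have "{q,p,r} = {p,q,r}" by (rule insert_commute)
  ultimately have m: "q \<in> P'" "p \<in> Q'" "r \<in> R'" "{q,p,r} \<in> F" by simp_all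
  show "\<exists>p\<in>P'. \<exists>q\<in>Q'. \<exists>r\<in>R'. {p,q,r} \<in> F" using m by blast
qed
lemma NE3_swap23: "NE3 \<mu> F P Q R \<Longrightarrow> NE3 \<mu> F P R Q"
  unfolding NE3_def
proof (intro allI impI)
  fix P' Q' R' assume a: "\<forall>P' Q' R'. P' \<subseteq> P \<and> Q' \<subseteq> Q \<and> R' \<subseteq> R \<and> big \<mu> P' P \<and> big \<mu> Q' Q
      \<and> big \<mu> R' R \<longrightarrow> (\<exists>p\<in>P'. \<exists>q\<in>Q'. \<exists>r\<in>R'. {p,q,r} \<in> F)"
    and b: "P' \<subseteq> P \<and> Q' \<subseteq> R \<and> R' \<subseteq> Q \<and> big \<mu> P' P \<and> big \<mu> Q' R \<and> big \<mu> R' Q"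
  from a[rule_format, of P' R' Q'] b obtain p q r where "p \<in> P'" "q \<in> R'" "r \<in> Q'" "{p,q,r} \<in> F" by blast
  moreover have "{p,r,q} = {p,q,r}" by (simp add: insert_commute)
  ultimately have m: "p \<in> P'" "r \<in> Q'" "q \<in> R'" "{p,r,q} \<in> F" by simp_all
  show "\<exists>p\<in>P'. \<exists>q\<in>Q'. \<exists>r\<in>R'. {p,q,r} \<in> F" using m by blast
qed
lemma ALL3_swap12: "ALL3 \<mu> F P Q R \<Longrightarrow> ALL3 \<mu> F Q P R"
proof -
  assume "ALL3 \<mu> F P Q R"
  then obtain P' Q' R' where h: "P' \<subseteq> P" "Q' \<subseteq> Q" "R' \<subseteq> R" "big \<mu> P' P" "big \<mu> Q' Q"
      "big \<mu> R' R" "\<forall>p\<in>P'. \<forall>q\<in>Q'. \<forall>r\<in>R'. {p,q,r} \<in> F" unfolding ALL3_def by blast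
  have "\<forall>q\<in>Q'. \<forall>p\<in>P'. \<forall>r\<in>R'. {q,p,r} \<in> F"
  proof (intro ballI)
    fix q p r assume "q \<in> Q'" "p \<in> P'" "r \<in> R'"
    then have "{p,q,r} \<in> F" using h(7) by blast
    moreover have "{q,p,r} = {p,q,r}" by (rule insert_commute)
    ultimately show "{q,p,r} \<in> F" by simp
  qed
  then show ?thesis unfolding ALL3_def using h by blast
qed
lemma ALL3_swap23: "ALL3 \<mu> F P Q R \<Longrightarrow> ALL3 \<mu> F P R Q"
proof -
  assume "ALL3 \<mu> F P Q R"
  then obtain P' Q' R' where h: "P' \<subseteq> P" "Q' \<subseteq> Q" "R' \<subseteq> R" "big \<mu> P' P" "big \<mu> Q' Q"
      "big \<mu> R' R" "\<forall>p\<in>P'. \<forall>q\<in>Q'. \<forall>r\<in>R'. {p,q,r} \<in> F" unfolding ALL3_def by blast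
  have "\<forall>p\<in>P'. \<forall>r\<in>R'. \<forall>q\<in>Q'. {p,r,q} \<in> F"
  proof (intro ballI)
    fix p r q assume "p \<in> P'" "r \<in> R'" "q \<in> Q'"
    then have "{p,q,r} \<in> F" using h(7) by blast
    moreover have "{p,r,q} = {p,q,r}" by (simp add: insert_commute)
    ultimately show "{p,r,q} \<in> F" by simp
  qed
  then show ?thesis unfolding ALL3_def using h by blast
qed

lemma tydist: "{a,b,c} = {VA u, VB v, VC v} \<Longrightarrow> ty a \<noteq> ty b \<and> ty a \<noteq> ty c \<and> ty b \<noteq> ty c"
proof -
  assume h: "{a,b,c} = {VA u, VB v, VC v}"
  have "{ty a, ty b, ty c} = ty ` {a,b,c}" by simp
  also have "\<dots> = {0,1,2}" unfolding h by simp
  finally have e: "{ty a, ty b, ty c} = {0,1,2::nat}" .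
  have "0 \<in> {ty a, ty b, ty c}" "1 \<in> {ty a, ty b, ty c}" "2 \<in> {ty a, ty b, ty c}" unfolding e by auto
  then show ?thesis by auto
qed



lemma edge_lab:
  assumes "{p,q,r} \<in> blowup_edges (hat_edges E) n"
  shows "\<exists>u v. (u,v) \<in> E \<and> {fst p, fst q, fst r} = {VA u, VB v, VC v}"
proof -
  obtain w1 w2 w3 i1 i2 i3 where e: "{p,q,r} = {(w1, i1), (w2, i2), (w3, i3)}"
    and w: "{w1,w2,w3} \<in> hat_edges E"
    using assms unfolding blowup_edges_def by blast
  obtain u v where uv: "(u,v) \<in> E" "{w1,w2,w3} = {VA u, VB v, VC v}"
    using w unfolding hat_edges_def by blast
  have "fst ` {p,q,r} = fst ` {(w1, i1), (w2, i2), (w3, i3)}" using e by simp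
  then have "{fst p, fst q, fst r} = {w1,w2,w3}" by simp
  then show ?thesis using uv by auto
qed

lemma edge_ty:
  assumes "{p,q,r} \<in> blowup_edges (hat_edges E) n"
  shows "ty (fst p) \<noteq> ty (fst q) \<and> ty (fst p) \<noteq> ty (fst r) \<and> ty (fst q) \<noteq> ty (fst r)"
  using edge_lab[OF assms] tydist by metis

lemma edge_BC:
  assumes "{p,q,r} \<in> blowup_edges (hat_edges E) n" "fst p = VB v" "fst q = VC v'"
  shows "v = v'"
proof -
  obtain u w where e: "{fst p, fst q, fst r} = {VA u, VB w, VC w}" using edge_lab[OF assms(1)] by blast
  have "VB v \<in> {fst p, fst q, fst r}" "VC v' \<in> {fst p, fst q, fst r}" using assms(2,3) by simp_all
  then have "VB v \<in> {VA u, VB w, VC w}" "VC v' \<in> {VA u, VB w, VC w}" unfolding e .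
  then show ?thesis by simp
qed

lemma edge_A:
  assumes "{p,q,r} \<in> blowup_edges (hat_edges E) n" "fst p = VB v" "fst q = VC v" "fst r = VA u"
  shows "(u,v) \<in> E"
proof -
  obtain u' w where e: "{fst p, fst q, fst r} = {VA u', VB w, VC w}" "(u',w) \<in> E"
    using edge_lab[OF assms(1)] by blast
  have "VB v \<in> {fst p, fst q, fst r}" "VA u \<in> {fst p, fst q, fst r}" using assms(2,4) by simp_all
  then have "VB v \<in> {VA u', VB w, VC w}" "VA u \<in> {VA u', VB w, VC w}" unfolding e(1) .
  then have "v = w" "u = u'" by simp_all
  then show ?thesis using e(2) by simp
qed

lemma edge_mk:
  assumes "fst p = VB v" "fst q = VC v" "fst r = VA u" "(u,v) \<in> E"
    "snd p < n" "snd q < n" "snd r < n"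
  shows "{p,q,r} \<in> blowup_edges (hat_edges E) n"
proof -
  have "{VB v, VC v, VA u} = {VA u, VB v, VC v}" by (simp add: insert_commute)
  then have h: "{fst p, fst q, fst r} \<in> hat_edges E" using assms(1-4) unfolding hat_edges_def
    by auto
  have pe: "{p,q,r} = {(fst p, snd p), (fst q, snd q), (fst r, snd r)}" by simp
  show ?thesis unfolding blowup_edges_def
    apply (rule CollectI)
    apply (rule exI[of _ "fst p"], rule exI[of _ "fst q"], rule exI[of _ "fst r"])
    apply (rule exI[of _ "snd p"], rule exI[of _ "snd q"], rule exI[of _ "snd r"])
    using pe h assms(5-7) by blast
qed


lemma dens0:
  assumes "\<forall>x\<in>X. \<forall>y\<in>Y. \<forall>z\<in>Z. {x,y,z} \<notin> F"
  shows "density3 F X Y Z = 0"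
proof -
  have e: "{(x,y,z). x \<in> X \<and> y \<in> Y \<and> z \<in> Z \<and> {x,y,z} \<in> F} = {}" using assms by auto
  show ?thesis unfolding density3_def e by simp
qed

lemma dens1:
  assumes "\<forall>x\<in>X. \<forall>y\<in>Y. \<forall>z\<in>Z. {x,y,z} \<in> F" "finite X" "finite Y" "finite Z"
    "X \<noteq> {}" "Y \<noteq> {}" "Z \<noteq> {}"
  shows "density3 F X Y Z = 1"
proof -
  have "{(x,y,z). x \<in> X \<and> y \<in> Y \<and> z \<in> Z \<and> {x,y,z} \<in> F} = X \<times> Y \<times> Z" using assms by auto
  then show ?thesis unfolding density3_def using assms by (simp add: card_cartesian_product)
qed

lemma frac_le1: "0 \<le> a \<Longrightarrow> a \<le> b \<Longrightarrow> (a::real) / b \<le> 1"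
  by (cases "b = 0") (simp_all add: divide_le_eq_1)

lemma dens_le1:
  assumes "finite X" "finite Y" "finite Z"
  shows "density3 F X Y Z \<le> 1"
proof -
  define S where "S = {(x,y,z). x \<in> X \<and> y \<in> Y \<and> z \<in> Z \<and> {x,y,z} \<in> F}"
  have "S \<subseteq> X \<times> Y \<times> Z" unfolding S_def by auto
  moreover have "finite (X \<times> Y \<times> Z)" using assms by simp
  ultimately have "card S \<le> card (X \<times> Y \<times> Z)" by (intro card_mono)
  also have "card (X \<times> Y \<times> Z) = card X * card Y * card Z" by (simp add: card_cartesian_product)
  finally have c: "card S \<le> card X * card Y * card Z" .
  have "real (card S) \<le> real (card X * card Y * card Z)" using c by (simp only: of_nat_le_iff)
  then have "real (card S) \<le> real (card X) * real (card Y) * real (card Z)" by simp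
  then have "real (card S) / (real (card X) * real (card Y) * real (card Z)) \<le> 1"
    by (intro frac_le1) simp_all
  then show ?thesis unfolding density3_def S_def .
qed

lemma dens_ge0: "density3 F X Y Z \<ge> 0"
  unfolding density3_def by simp

lemma card_ty_split:
  assumes "finite P"
  shows "real (card P) \<le> real (card {w\<in>P. ty (fst w) = 0}) + real (card {w\<in>P. ty (fst w) = 1})
     + real (card {w\<in>P. ty (fst w) = 2})"
proof -
  let ?A = "{w\<in>P. ty (fst w) = 0}" and ?B = "{w\<in>P. ty (fst w) = 1}" and ?C = "{w\<in>P. ty (fst w) = 2}"
  have "P \<subseteq> ?A \<union> ?B \<union> ?C"
  proof
    fix w assume "w \<in> P"
    then show "w \<in> ?A \<union> ?B \<union> ?C" by (cases "fst w") auto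
  qed
  then have "card P \<le> card (?A \<union> ?B \<union> ?C)" using assms by (intro card_mono) auto
  also have "\<dots> \<le> card (?A \<union> ?B) + card ?C" by (rule card_Un_le)
  also have "\<dots> \<le> card ?A + card ?B + card ?C" using card_Un_le[of ?A ?B] by simp
  finally show ?thesis by linarith
qed



lemma memW: "w \<in> blowup_vertices (hat_vertices U V) n \<longleftrightarrow>
   (fst w \<in> VA ` U \<or> fst w \<in> VB ` V \<or> fst w \<in> VC ` V) \<and> snd w < n"
  unfolding blowup_vertices_def hat_vertices_def by (cases w) auto

lemma pigeon:
  fixes B :: "nat \<Rightarrow> 'a set"
  assumes "finite V" "card V = K1" "real K1 * \<mu> < 1/2" "\<mu> \<le> 1/4" "0 < \<mu>"
    "finite P" "P \<noteq> {}" "S \<subseteq> (\<Union>v\<in>V. B v)" "\<And>v. B v \<subseteq> P"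
    "(1 - 2*\<mu>) * real (card P) < real (card S)"
  shows "\<exists>v\<in>V. big \<mu> (B v) P"
proof (rule ccontr)
  assume "\<not> ?thesis"
  then have lt: "\<And>v. v \<in> V \<Longrightarrow> real (card (B v)) < \<mu> * real (card P)" by (auto simp: big_def)
  have fin: "\<And>v. finite (B v)" using assms(6,9) finite_subset by blast
  have "card S \<le> card (\<Union>v\<in>V. B v)"
    using assms(1,8) fin by (intro card_mono) auto
  also have "\<dots> \<le> (\<Sum>v\<in>V. card (B v))" by (rule card_UN_le[OF assms(1)])
  finally have "real (card S) \<le> (\<Sum>v\<in>V. real (card (B v)))"
    by (metis of_nat_le_iff of_nat_sum)
  also have "\<dots> \<le> (\<Sum>v\<in>V. \<mu> * real (card P))"
    using lt by (intro sum_mono) (simp add: less_imp_le)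
  also have "\<dots> = real K1 * \<mu> * real (card P)" using assms(2) by simp
  finally have a: "real (card S) \<le> real K1 * \<mu> * real (card P)" .
  have cp: "real (card P) > 0" using assms(6,7) by (simp add: card_gt_0_iff)
  have "real K1 * \<mu> * real (card P) \<le> 1/2 * real (card P)"
    using assms(3) cp by (intro mult_right_mono) auto
  also have "\<dots> \<le> (1 - 2*\<mu>) * real (card P)"
    using assms(4) cp by (intro mult_right_mono) auto
  finally show False using a assms(10) by linarith
qed



lemma big_self: "0 \<le> \<mu> \<Longrightarrow> \<mu> \<le> 1 \<Longrightarrow> big \<mu> S S"
  unfolding big_def by (simp add: mult_left_le_one_le)

lemma core:
  fixes P Q R :: "(nat hatv \<times> nat) set" and U V :: "nat set"
  assumes fin: "finite P" "finite Q" "finite R"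
    and sub: "P \<subseteq> blowup_vertices (hat_vertices U V) n" "Q \<subseteq> blowup_vertices (hat_vertices U V) n"
      "R \<subseteq> blowup_vertices (hat_vertices U V) n"
    and ne: "P \<noteq> {}" "Q \<noteq> {}" "R \<noteq> {}"
    and mu: "0 < \<mu>" "\<mu> \<le> 1/4" "real K1 * \<mu> < 1/2" and V: "finite V" "card V = K1"
    and NE: "NE3 \<mu> (blowup_edges (hat_edges E) n) P Q R"
    and hA: "big \<mu> {w\<in>R. ty (fst w) = 0} R" and hB: "big \<mu> {w\<in>P. ty (fst w) = 1} P"
    and hC: "big \<mu> {w\<in>Q. ty (fst w) = 2} Q"
  shows "ALL3 \<mu> (blowup_edges (hat_edges E) n) P Q R"
proof -
  let ?F = "blowup_edges (hat_edges E) n"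
  have NEu: "\<And>P' Q' R'. P'\<subseteq>P \<Longrightarrow> Q'\<subseteq>Q \<Longrightarrow> R'\<subseteq>R \<Longrightarrow> big \<mu> P' P \<Longrightarrow> big \<mu> Q' Q \<Longrightarrow>
      big \<mu> R' R \<Longrightarrow> \<exists>p\<in>P'. \<exists>q\<in>Q'. \<exists>r\<in>R'. {p,q,r} \<in> ?F"
    using NE unfolding NE3_def by blast
  have bs: "big \<mu> P P" "big \<mu> Q Q" "big \<mu> R R" using mu by (auto intro: big_self)
  have nb: "\<not> big \<mu> {w\<in>P. ty (fst w) = 0} P" "\<not> big \<mu> {w\<in>P. ty (fst w) = 2} P"
     "\<not> big \<mu> {w\<in>Q. ty (fst w) = 0} Q" "\<not> big \<mu> {w\<in>Q. ty (fst w) = 1} Q"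
     "\<not> big \<mu> {w\<in>R. ty (fst w) = 1} R" "\<not> big \<mu> {w\<in>R. ty (fst w) = 2} R"
  proof -
    show "\<not> big \<mu> {w\<in>P. ty (fst w) = 0} P"
    proof
      assume "big \<mu> {w\<in>P. ty (fst w) = 0} P"
      from NEu[OF _ _ _ this bs(2) hA] obtain p q r where "{p,q,r} \<in> ?F"
        "ty (fst p) = 0" "ty (fst r) = 0" by auto
      then show False using edge_ty by metis
    qed
    show "\<not> big \<mu> {w\<in>P. ty (fst w) = 2} P"
    proof
      assume "big \<mu> {w\<in>P. ty (fst w) = 2} P"
      from NEu[OF _ _ _ this hC bs(3)] obtain p q r where "{p,q,r} \<in> ?F"
        "ty (fst p) = 2" "ty (fst q) = 2" by auto
      then show False using edge_ty by metis
    qed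
    show "\<not> big \<mu> {w\<in>Q. ty (fst w) = 0} Q"
    proof
      assume "big \<mu> {w\<in>Q. ty (fst w) = 0} Q"
      from NEu[OF _ _ _ bs(1) this hA] obtain p q r where "{p,q,r} \<in> ?F"
        "ty (fst q) = 0" "ty (fst r) = 0" by auto
      then show False using edge_ty by metis
    qed
    show "\<not> big \<mu> {w\<in>Q. ty (fst w) = 1} Q"
    proof
      assume "big \<mu> {w\<in>Q. ty (fst w) = 1} Q"
      from NEu[OF _ _ _ hB this bs(3)] obtain p q r where "{p,q,r} \<in> ?F"
        "ty (fst p) = 1" "ty (fst q) = 1" by auto
      then show False using edge_ty by metis
    qed
    show "\<not> big \<mu> {w\<in>R. ty (fst w) = 1} R"
    proof
      assume "big \<mu> {w\<in>R. ty (fst w) = 1} R"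
      from NEu[OF _ _ _ hB bs(2) this] obtain p q r where "{p,q,r} \<in> ?F"
        "ty (fst p) = 1" "ty (fst r) = 1" by auto
      then show False using edge_ty by metis
    qed
    show "\<not> big \<mu> {w\<in>R. ty (fst w) = 2} R"
    proof
      assume "big \<mu> {w\<in>R. ty (fst w) = 2} R"
      from NEu[OF _ _ _ bs(1) hC this] obtain p q r where "{p,q,r} \<in> ?F"
        "ty (fst q) = 2" "ty (fst r) = 2" by auto
      then show False using edge_ty by metis
    qed
  qed
  have cP: "(1 - 2*\<mu>) * real (card P) < real (card {w\<in>P. ty (fst w) = 1})"
    using card_ty_split[OF fin(1)] nb(1,2) unfolding big_def by (simp add: algebra_simps)
  have cQ: "(1 - 2*\<mu>) * real (card Q) < real (card {w\<in>Q. ty (fst w) = 2})"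
    using card_ty_split[OF fin(2)] nb(3,4) unfolding big_def by (simp add: algebra_simps)
  have cR: "(1 - 2*\<mu>) * real (card R) < real (card {w\<in>R. ty (fst w) = 0})"
    using card_ty_split[OF fin(3)] nb(5,6) unfolding big_def by (simp add: algebra_simps)
  have "{w\<in>P. ty (fst w) = 1} \<subseteq> (\<Union>v\<in>V. {w\<in>P. fst w = VB v})"
  proof
    fix w assume w: "w \<in> {w\<in>P. ty (fst w) = 1}"
    then have "w \<in> blowup_vertices (hat_vertices U V) n" using sub by auto
    then show "w \<in> (\<Union>v\<in>V. {w\<in>P. fst w = VB v})" using w unfolding memW by auto
  qed
  from pigeon[OF V mu(3,2,1) fin(1) ne(1) this _ cP] obtain v where
    v: "v \<in> V" "big \<mu> {w\<in>P. fst w = VB v} P" by auto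
  have "{w\<in>Q. ty (fst w) = 2} \<subseteq> (\<Union>v\<in>V. {w\<in>Q. fst w = VC v})"
  proof
    fix w assume w: "w \<in> {w\<in>Q. ty (fst w) = 2}"
    then have "w \<in> blowup_vertices (hat_vertices U V) n" using sub by auto
    then show "w \<in> (\<Union>v\<in>V. {w\<in>Q. fst w = VC v})" using w unfolding memW by auto
  qed
  from pigeon[OF V mu(3,2,1) fin(2) ne(2) this _ cQ] obtain v' where
    v': "v' \<in> V" "big \<mu> {w\<in>Q. fst w = VC v'} Q" by auto
  have vv: "v' = v"
  proof -
    from NEu[OF _ _ _ v(2) v'(2) bs(3)] obtain p q r where "{p,q,r} \<in> ?F"
      "fst p = VB v" "fst q = VC v'" by auto
    then show ?thesis using edge_BC by metis
  qed
  let ?AN = "{w\<in>R. \<exists>u. fst w = VA u \<and> (u,v) \<in> E}"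
  let ?AnN = "{w\<in>R. \<exists>u. fst w = VA u \<and> (u,v) \<notin> E}"
  have bAN: "big \<mu> ?AN R"
  proof (rule ccontr)
    assume nAN: "\<not> big \<mu> ?AN R"
    have "{w\<in>R. ty (fst w) = 0} \<subseteq> ?AN \<union> ?AnN"
    proof
      fix w assume "w \<in> {w\<in>R. ty (fst w) = 0}"
      then show "w \<in> ?AN \<union> ?AnN" by (cases "fst w") auto
    qed
    then have "card {w\<in>R. ty (fst w) = 0} \<le> card (?AN \<union> ?AnN)"
      using fin(3) by (intro card_mono) auto
    also have "\<dots> \<le> card ?AN + card ?AnN" by (rule card_Un_le)
    finally have s1: "real (card {w\<in>R. ty (fst w) = 0}) \<le> real (card ?AN) + real (card ?AnN)"
      by linarith
    have s2: "real (card ?AN) < \<mu> * real (card R)" using nAN unfolding big_def by simp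
    have s3: "real (card R) - 2 * (\<mu> * real (card R)) < real (card {w\<in>R. ty (fst w) = 0})"
      using cR by (simp add: algebra_simps)
    have "0 \<le> (1 - 4*\<mu>) * real (card R)" using mu(2) by simp
    then have s4: "4 * (\<mu> * real (card R)) \<le> real (card R)" by (simp add: algebra_simps)
    have "big \<mu> ?AnN R" unfolding big_def using s1 s2 s3 s4 by linarith
    from NEu[OF _ _ _ v(2) v'(2)[unfolded vv] this] obtain p q r where e: "{p,q,r} \<in> ?F"
      "fst p = VB v" "fst q = VC v" "r \<in> ?AnN" by blast
    then obtain u where u: "fst r = VA u" "(u,v) \<notin> E" by blast
    show False using edge_A[OF e(1) e(2) e(3) u(1)] u(2) by simp
  qed
  show ?thesis unfolding ALL3_def
  proof (intro exI conjI)
    show "{w\<in>P. fst w = VB v} \<subseteq> P" "{w\<in>Q. fst w = VC v} \<subseteq> Q" "?AN \<subseteq> R" by auto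
    show "big \<mu> {w\<in>P. fst w = VB v} P" "big \<mu> {w\<in>Q. fst w = VC v} Q" "big \<mu> ?AN R"
      using v(2) v'(2) vv bAN by auto
    show "\<forall>p\<in>{w\<in>P. fst w = VB v}. \<forall>q\<in>{w\<in>Q. fst w = VC v}. \<forall>r\<in>?AN. {p,q,r} \<in> ?F"
    proof (intro ballI)
      fix p q r assume p: "p \<in> {w\<in>P. fst w = VB v}" and q: "q \<in> {w\<in>Q. fst w = VC v}" and r: "r \<in> ?AN"
      then obtain u where u: "fst r = VA u" "(u,v) \<in> E" by auto
      have "p \<in> blowup_vertices (hat_vertices U V) n" "q \<in> blowup_vertices (hat_vertices U V) n"
        "r \<in> blowup_vertices (hat_vertices U V) n" using p q r sub by auto
      then have "snd p < n" "snd q < n" "snd r < n" unfolding memW by simp_all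
      then show "{p,q,r} \<in> ?F" using edge_mk[of p v q r u E n] p q u by auto
    qed
  qed
qed



lemma some_type:
  assumes "finite X" "0 < \<mu>" "\<mu> \<le> 1/4"
  shows "\<exists>k<3. big \<mu> {w\<in>X. ty (fst w) = k} X"
proof (rule ccontr)
  assume "\<not> ?thesis"
  then have "\<not> big \<mu> {w\<in>X. ty (fst w) = 0} X" "\<not> big \<mu> {w\<in>X. ty (fst w) = 1} X"
    "\<not> big \<mu> {w\<in>X. ty (fst w) = 2} X" by auto
  then have "real (card X) < 3 * \<mu> * real (card X)"
    using card_ty_split[OF assms(1)] unfolding big_def by linarith
  moreover have "3 * \<mu> * real (card X) \<le> real (card X)"
    using assms by (simp add: mult_left_le_one_le)
  ultimately show False by linarith
qed

lemma reg_hom: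
  fixes X Y Z :: "(nat hatv \<times> nat) set" and U V :: "nat set"
  assumes fin: "finite X" "finite Y" "finite Z"
    and sub: "X \<subseteq> blowup_vertices (hat_vertices U V) n" "Y \<subseteq> blowup_vertices (hat_vertices U V) n"
      "Z \<subseteq> blowup_vertices (hat_vertices U V) n"
    and ne: "X \<noteq> {}" "Y \<noteq> {}" "Z \<noteq> {}"
    and mu: "0 < \<mu>" "real K1 * \<mu> < 1/2" and V: "finite V" "card V = K1"
    and reg: "regular_triple (blowup_edges (hat_edges E) n) \<mu> X Y Z"
  shows "homogeneous_triple (blowup_edges (hat_edges E) n) (4*\<mu>) X Y Z"
proof -
  let ?F = "blowup_edges (hat_edges E) n"
  let ?d = "density3 ?F X Y Z"
  have d01: "0 \<le> ?d" "?d \<le> 1" using dens_ge0 dens_le1 fin by auto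
  have regu: "\<And>X' Y' Z'. X' \<subseteq> X \<Longrightarrow> Y' \<subseteq> Y \<Longrightarrow> Z' \<subseteq> Z \<Longrightarrow> big \<mu> X' X \<Longrightarrow> big \<mu> Y' Y \<Longrightarrow>
     big \<mu> Z' Z \<Longrightarrow> \<bar>?d - density3 ?F X' Y' Z'\<bar> \<le> \<mu>"
    using reg unfolding regular_triple_def big_def by blast
  show ?thesis
  proof (cases "?d < 4*\<mu>")
    case True
    then show ?thesis unfolding homogeneous_triple_def Let_def using d01 by auto
  next
    case False
    then have mu4: "\<mu> \<le> 1/4" using d01 by linarith
    have NE: "NE3 \<mu> ?F X Y Z" unfolding NE3_def
    proof (intro allI impI)
      fix X' Y' Z' assume h: "X' \<subseteq> X \<and> Y' \<subseteq> Y \<and> Z' \<subseteq> Z \<and> big \<mu> X' X \<and> big \<mu> Y' Y \<and> big \<mu> Z' Z"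
      show "\<exists>p\<in>X'. \<exists>q\<in>Y'. \<exists>r\<in>Z'. {p,q,r} \<in> ?F"
      proof (rule ccontr)
        assume "\<not> ?thesis"
        then have "density3 ?F X' Y' Z' = 0" by (intro dens0) auto
        then have "?d \<le> \<mu>" using regu[of X' Y' Z'] h by auto
        then show False using False mu by linarith
      qed
    qed
    obtain kx where kx: "kx < 3" "big \<mu> {w\<in>X. ty (fst w) = kx} X" using some_type fin mu mu4 by blast
    obtain ky where ky: "ky < 3" "big \<mu> {w\<in>Y. ty (fst w) = ky} Y" using some_type fin mu mu4 by blast
    obtain kz where kz: "kz < 3" "big \<mu> {w\<in>Z. ty (fst w) = kz} Z" using some_type fin mu mu4 by blast
    have bs: "big \<mu> X X" "big \<mu> Y Y" "big \<mu> Z Z" using mu mu4 by (auto intro: big_self)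
    have NEu: "\<And>P' Q' R'. P'\<subseteq>X \<Longrightarrow> Q'\<subseteq>Y \<Longrightarrow> R'\<subseteq>Z \<Longrightarrow> big \<mu> P' X \<Longrightarrow> big \<mu> Q' Y \<Longrightarrow>
      big \<mu> R' Z \<Longrightarrow> \<exists>p\<in>P'. \<exists>q\<in>Q'. \<exists>r\<in>R'. {p,q,r} \<in> ?F"
      using NE unfolding NE3_def by blast
    have kxy: "kx \<noteq> ky"
    proof
      assume e: "kx = ky"
      from NEu[OF _ _ _ kx(2) ky(2) bs(3)] obtain p q r where "{p,q,r} \<in> ?F"
        "ty (fst p) = kx" "ty (fst q) = ky" by auto
      then show False using edge_ty e by metis
    qed
    have kxz: "kx \<noteq> kz"
    proof
      assume e: "kx = kz"
      from NEu[OF _ _ _ kx(2) bs(2) kz(2)] obtain p q r where "{p,q,r} \<in> ?F"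
        "ty (fst p) = kx" "ty (fst r) = kz" by auto
      then show False using edge_ty e by metis
    qed
    have kyz: "ky \<noteq> kz"
    proof
      assume e: "ky = kz"
      from NEu[OF _ _ _ bs(1) ky(2) kz(2)] obtain p q r where "{p,q,r} \<in> ?F"
        "ty (fst q) = ky" "ty (fst r) = kz" by auto
      then show False using edge_ty e by metis
    qed
    note C = core[OF _ _ _ _ _ _ _ _ _ mu(1) mu4 mu(2) V]
    have "ALL3 \<mu> ?F X Y Z"
    proof -
      have "(kx = 1 \<and> ky = 2 \<and> kz = 0) \<or> (kx = 1 \<and> kz = 2 \<and> ky = 0) \<or>
            (ky = 1 \<and> kx = 2 \<and> kz = 0) \<or> (ky = 1 \<and> kz = 2 \<and> kx = 0) \<or>
            (kz = 1 \<and> kx = 2 \<and> ky = 0) \<or> (kz = 1 \<and> ky = 2 \<and> kx = 0)"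
        using kx(1) ky(1) kz(1) kxy kxz kyz by presburger
      then show ?thesis
      proof (elim disjE conjE)
        assume e: "kx = 1" "ky = 2" "kz = 0"
        have hB: "big \<mu> {w\<in>X. ty (fst w) = 1} X" using kx(2) e by simp
        have hC: "big \<mu> {w\<in>Y. ty (fst w) = 2} Y" using ky(2) e by simp
        have hA: "big \<mu> {w\<in>Z. ty (fst w) = 0} Z" using kz(2) e by simp
        have r: "ALL3 \<mu> ?F X Y Z"
          by (rule C[OF fin(1) fin(2) fin(3) sub(1) sub(2) sub(3) ne(1) ne(2) ne(3) NE hA hB hC])
        show ?thesis by (rule r)
      next
        assume e: "kx = 1" "kz = 2" "ky = 0"
        have hB: "big \<mu> {w\<in>X. ty (fst w) = 1} X" using kx(2) e by simp
        have hC: "big \<mu> {w\<in>Z. ty (fst w) = 2} Z" using kz(2) e by simp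
        have hA: "big \<mu> {w\<in>Y. ty (fst w) = 0} Y" using ky(2) e by simp
        have r: "ALL3 \<mu> ?F X Z Y"
          by (rule C[OF fin(1) fin(3) fin(2) sub(1) sub(3) sub(2) ne(1) ne(3) ne(2) NE3_swap23[OF NE] hA hB hC])
        show ?thesis by (rule ALL3_swap23[OF r])
      next
        assume e: "ky = 1" "kx = 2" "kz = 0"
        have hB: "big \<mu> {w\<in>Y. ty (fst w) = 1} Y" using ky(2) e by simp
        have hC: "big \<mu> {w\<in>X. ty (fst w) = 2} X" using kx(2) e by simp
        have hA: "big \<mu> {w\<in>Z. ty (fst w) = 0} Z" using kz(2) e by simp
        have r: "ALL3 \<mu> ?F Y X Z"
          by (rule C[OF fin(2) fin(1) fin(3) sub(2) sub(1) sub(3) ne(2) ne(1) ne(3) NE3_swap12[OF NE] hA hB hC])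
        show ?thesis by (rule ALL3_swap12[OF r])
      next
        assume e: "ky = 1" "kz = 2" "kx = 0"
        have hB: "big \<mu> {w\<in>Y. ty (fst w) = 1} Y" using ky(2) e by simp
        have hC: "big \<mu> {w\<in>Z. ty (fst w) = 2} Z" using kz(2) e by simp
        have hA: "big \<mu> {w\<in>X. ty (fst w) = 0} X" using kx(2) e by simp
        have r: "ALL3 \<mu> ?F Y Z X"
          by (rule C[OF fin(2) fin(3) fin(1) sub(2) sub(3) sub(1) ne(2) ne(3) ne(1) NE3_swap23[OF NE3_swap12[OF NE]] hA hB hC])
        show ?thesis by (rule ALL3_swap12[OF ALL3_swap23[OF r]])
      next
        assume e: "kz = 1" "kx = 2" "ky = 0"
        have hB: "big \<mu> {w\<in>Z. ty (fst w) = 1} Z" using kz(2) e by simp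
        have hC: "big \<mu> {w\<in>X. ty (fst w) = 2} X" using kx(2) e by simp
        have hA: "big \<mu> {w\<in>Y. ty (fst w) = 0} Y" using ky(2) e by simp
        have r: "ALL3 \<mu> ?F Z X Y"
          by (rule C[OF fin(3) fin(1) fin(2) sub(3) sub(1) sub(2) ne(3) ne(1) ne(2) NE3_swap12[OF NE3_swap23[OF NE]] hA hB hC])
        show ?thesis by (rule ALL3_swap23[OF ALL3_swap12[OF r]])
      next
        assume e: "kz = 1" "ky = 2" "kx = 0"
        have hB: "big \<mu> {w\<in>Z. ty (fst w) = 1} Z" using kz(2) e by simp
        have hC: "big \<mu> {w\<in>Y. ty (fst w) = 2} Y" using ky(2) e by simp
        have hA: "big \<mu> {w\<in>X. ty (fst w) = 0} X" using kx(2) e by simp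
        have r: "ALL3 \<mu> ?F Z Y X"
          by (rule C[OF fin(3) fin(2) fin(1) sub(3) sub(2) sub(1) ne(3) ne(2) ne(1) NE3_swap12[OF NE3_swap23[OF NE3_swap12[OF NE]]] hA hB hC])
        show ?thesis by (rule ALL3_swap12[OF ALL3_swap23[OF ALL3_swap12[OF r]]])
      qed
    qed
    then obtain X' Y' Z' where h: "X' \<subseteq> X" "Y' \<subseteq> Y" "Z' \<subseteq> Z" "big \<mu> X' X" "big \<mu> Y' Y" "big \<mu> Z' Z"
      "\<forall>p\<in>X'. \<forall>q\<in>Y'. \<forall>r\<in>Z'. {p,q,r} \<in> ?F" unfolding ALL3_def by blast
    have nz: "\<And>S' S :: (nat hatv \<times> nat) set. big \<mu> S' S \<Longrightarrow> finite S \<Longrightarrow> S \<noteq> {} \<Longrightarrow> S' \<noteq> {}"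
    proof -
      fix S' S :: "(nat hatv \<times> nat) set" assume "big \<mu> S' S" "finite S" "S \<noteq> {}"
      then have "0 < \<mu> * real (card S)" "\<mu> * real (card S) \<le> real (card S')"
        using mu by (auto simp: big_def card_gt_0_iff)
      then show "S' \<noteq> {}" by auto
    qed
    have "density3 ?F X' Y' Z' = 1"
      using h fin ne nz[OF h(4)] nz[OF h(5)] nz[OF h(6)]
      by (intro dens1) (auto intro: finite_subset)
    then have "?d \<ge> 1 - \<mu>" using regu[OF h(1-6)] by auto
    then show ?thesis unfolding homogeneous_triple_def Let_def using d01 mu by auto
  qed
qed



theorem lemma6p6:
  fixes t K1 K2 :: nat and \<mu> :: real
  assumes "t \<ge> 1" and "1 \<le> K1" and "K1 \<le> K2"
    and "0 < \<mu>" and "\<mu> < 1 / (2 * real K1)"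
  shows "\<exists>n0::nat. \<forall>n\<ge>n0. \<forall>(U::nat set) (V::nat set) (E::(nat \<times> nat) set) P.
           finite U \<and> finite V \<and> card V = K1 \<and> card U = K2 \<and> E \<subseteq> U \<times> V \<and>
           partition_on (blowup_vertices (hat_vertices U V) n) P \<and> card P \<le> t \<and>
           regular_partition (blowup_edges (hat_edges E) n)
             (blowup_vertices (hat_vertices U V) n) P \<mu>
           \<longrightarrow> homogeneous_partition (blowup_edges (hat_edges E) n)
                 (blowup_vertices (hat_vertices U V) n) P (4 * \<mu>)"
proof (intro exI[of _ 0] allI impI)
  fix n :: nat and U V :: "nat set" and E :: "(nat \<times> nat) set" and P
  assume h: "0 \<le> n" "finite U \<and> finite V \<and> card V = K1 \<and> card U = K2 \<and> E \<subseteq> U \<times> V \<and>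
           partition_on (blowup_vertices (hat_vertices U V) n) P \<and> card P \<le> t \<and>
           regular_partition (blowup_edges (hat_edges E) n)
             (blowup_vertices (hat_vertices U V) n) P \<mu>"
  let ?W = "blowup_vertices (hat_vertices U V) n"
  let ?F = "blowup_edges (hat_edges E) n"
  have fU: "finite U" and fV: "finite V" and cV: "card V = K1" and pP: "partition_on ?W P"
    and rp: "regular_partition ?F ?W P \<mu>" using h by auto
  have fW: "finite ?W" unfolding blowup_vertices_def hat_vertices_def using fU fV by auto
  have K1mu: "real K1 * \<mu> < 1/2"
  proof -
    have "real K1 > 0" using assms(2) by simp
    then show ?thesis using assms(5) by (simp add: field_simps)
  qed
  have partP: "\<And>X. X \<in> P \<Longrightarrow> X \<subseteq> ?W \<and> X \<noteq> {} \<and> finite X"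
    using pP fW unfolding partition_on_def by (auto intro: finite_subset)
  have sub: "\<Union>{X \<times> Y \<times> Z | X Y Z. X \<in> P \<and> Y \<in> P \<and> Z \<in> P \<and> regular_triple ?F \<mu> X Y Z}
     \<subseteq> \<Union>{X \<times> Y \<times> Z | X Y Z. X \<in> P \<and> Y \<in> P \<and> Z \<in> P \<and> homogeneous_triple ?F (4*\<mu>) X Y Z}"
  proof -
    have "\<And>X Y Z. X \<in> P \<Longrightarrow> Y \<in> P \<Longrightarrow> Z \<in> P \<Longrightarrow> regular_triple ?F \<mu> X Y Z \<Longrightarrow>
       homogeneous_triple ?F (4*\<mu>) X Y Z"
      using reg_hom[OF _ _ _ _ _ _ _ _ _ assms(4) K1mu fV cV] partP by metis
    then show ?thesis by blast
  qed
  have fin: "finite (\<Union>{X \<times> Y \<times> Z | X Y Z. X \<in> P \<and> Y \<in> P \<and> Z \<in> P \<and> homogeneous_triple ?F (4*\<mu>) X Y Z})"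
  proof (rule finite_subset[of _ "?W \<times> ?W \<times> ?W"])
    show "\<Union>{X \<times> Y \<times> Z | X Y Z. X \<in> P \<and> Y \<in> P \<and> Z \<in> P \<and> homogeneous_triple ?F (4*\<mu>) X Y Z}
      \<subseteq> ?W \<times> ?W \<times> ?W" using partP by blast
    show "finite (?W \<times> ?W \<times> ?W)" using fW by simp
  qed
  have "(1 - 4*\<mu>) * real (card ?W) ^ 3 \<le> (1 - \<mu>) * real (card ?W) ^ 3"
    using assms(4) by (intro mult_right_mono) auto
  also have "\<dots> \<le> real (card (\<Union>{X \<times> Y \<times> Z | X Y Z. X \<in> P \<and> Y \<in> P \<and> Z \<in> P \<and> regular_triple ?F \<mu> X Y Z}))"
    using rp unfolding regular_partition_def by simp
  also have "\<dots> \<le> real (card (\<Union>{X \<times> Y \<times> Z | X Y Z. X \<in> P \<and> Y \<in> P \<and> Z \<in> P \<and> homogeneous_triple ?F (4*\<mu>) X Y Z}))"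
    using card_mono[OF fin sub] by simp
  finally show "homogeneous_partition ?F ?W P (4 * \<mu>)"
    unfolding homogeneous_partition_def by simp
qed


end
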